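(* Let $n>0$ and let $\mathcal{P}=(P_1,\dots,P_n)$ be a family of lattice polytopes in $\mathbb{R}^d$ with $0\in P_i$ for all $i$. Then \[ (-1)^n\,\mathrm{CM}E(P_1,\dots,P_n)\;=\;\sum_{\mu\in P_{[n]}\cap\mathbb{Z}^d}\tilde\chi\big(\Delta(\mathcal{P};\mu)\big), \] where $\tilde\chi$ denotes the reduced Euler characteristic.
   Context: A lattice polytope is a convex polytope in $\mathbb{R}^d$ all of whose vertices lie in $\mathbb{Z}^d$. For $S\subseteq[n]=\{1,\dots,n\}$ write $P_S:=\sum_{i\in S}P_i=\{\sum_{i\in S}p_i : p_i\in P_i\}$ (Minkowski sum), with $P_\emptyset:=\{0\}$. For a set $S\subset\mathbb{R}^d$, the discrete volume is $E(S):=|S\cap\mathbb{Z}^d|$. The discrete mixed volume is $\mathrm{CM}E(P_1,\dots,P_n):=\sum_{I\subseteq[n]}(-1)^{n-|I|}E(P_I)$. For $\mu\in\mathbb{R}^d$, the Minkowski complex $\Delta(\mathcal{P};\mu)$ is the simplicial complex on vertex set $[n]$ consisting of all $\sigma\subseteq[n]$ with $\mu\notin P_\sigma$. The reduced Euler characteristic of a simplicial complex $\Delta$ (a family of subsets closed under taking subsets, possibly containing the empty set) is $\tilde\chi(\Delta)=\sum_{\sigma\in\Delta}(-1)^{|\sigma|-1}$. *)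

theory Defs
  imports "HOL-Analysis.Analysis"
begin

definition lattice_pts :: "(real^'d) set" where
  "lattice_pts = {x. \<forall>i. x $ i \<in> \<int>}"

definition lattice_polytope :: "(real^'d) set \<Rightarrow> bool" where
  "lattice_polytope P \<longleftrightarrow> (\<exists>V. finite V \<and> V \<noteq> {} \<and> V \<subseteq> lattice_pts \<and> P = convex hull V)"

text \<open>Minkowski sum P_S of the family P over the index set S (P_{} = {0}).\<close>
definition mink_sum :: "(nat \<Rightarrow> (real^'d) set) \<Rightarrow> nat set \<Rightarrow> (real^'d) set" where
  "mink_sum P S = {(\<Sum>i\<in>S. p i) | p. \<forall>i\<in>S. p i \<in> P i}"

definition discrete_volume :: "(real^'d) set \<Rightarrow> nat" where
  "discrete_volume S = card (S \<inter> lattice_pts)"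

definition discrete_mixed_volume :: "(nat \<Rightarrow> (real^'d) set) \<Rightarrow> nat \<Rightarrow> int" where
  "discrete_mixed_volume P n =
     (\<Sum>I\<in>Pow {1..n}. (-1) ^ (n - card I) * int (discrete_volume (mink_sum P I)))"

definition minkowski_complex :: "(nat \<Rightarrow> (real^'d) set) \<Rightarrow> nat \<Rightarrow> real^'d \<Rightarrow> nat set set" where
  "minkowski_complex P n \<mu> = {\<sigma>. \<sigma> \<subseteq> {1..n} \<and> \<mu> \<notin> mink_sum P \<sigma>}"

definition reduced_euler_char :: "nat set set \<Rightarrow> int" where
  "reduced_euler_char \<Delta> = (\<Sum>\<sigma>\<in>\<Delta>. (-1) ^ (card \<sigma> + 1))"

end

theory Submission
  imports Defs
begin

lemma alt_sum_zero:
  assumes "finite A" "A \<noteq> {}"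
  shows "(\<Sum>X\<in>Pow A. (-1::int) ^ card X) = 0"
proof -
  have "(\<Prod>x\<in>A. (1::int) - 1) = (\<Sum>X\<in>Pow A. (-1) ^ card X * (\<Prod>x\<in>X. 1) * (\<Prod>x\<in>A-X. 1))"
    by (rule prod_diff_conv_sum[OF assms(1)])
  moreover have "card A > 0" using assms by (simp add: card_gt_0_iff)
  moreover have "(0::int) ^ card A = 0" using \<open>card A > 0\<close> by simp
  ultimately show ?thesis by simp
qed

lemma lattice_bounded_finite:
  "finite (cball (0::real^'d) R \<inter> lattice_pts)"
proof -
  define F where "F = real_of_int ` {-\<lceil>R\<rceil>..\<lceil>R\<rceil>}"
  have "cball (0::real^'d) R \<inter> lattice_pts \<subseteq> vec_lambda ` (PiE UNIV (\<lambda>_. F))"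
  proof
    fix x :: "real^'d" assume x: "x \<in> cball 0 R \<inter> lattice_pts"
    have "(\<lambda>i. x $ i) \<in> PiE UNIV (\<lambda>_. F)"
    proof (auto simp: PiE_def)
      fix i
      have "\<bar>x$i\<bar> \<le> R" using x component_le_norm_cart[of x i] by simp
      moreover obtain k where k: "x $ i = of_int k" using x unfolding lattice_pts_def
        by (auto elim!: Ints_cases)
      ultimately have "real_of_int \<bar>k\<bar> \<le> R" by simp
      then have "\<lceil>real_of_int \<bar>k\<bar>\<rceil> \<le> \<lceil>R\<rceil>" by (rule ceiling_mono)
      then have "\<bar>k\<bar> \<le> \<lceil>R\<rceil>" by (simp del: of_int_abs)
      then show "x $ i \<in> F" unfolding F_def using k by (intro image_eqI[of _ _ k]) auto
    qed
    then show "x \<in> vec_lambda ` (PiE UNIV (\<lambda>_. F))"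
      by (metis image_eqI vec_lambda_eta)
  qed
  moreover have "finite (vec_lambda ` (PiE (UNIV::'d set) (\<lambda>_. F)))"
    unfolding F_def by (intro finite_imageI finite_PiE) auto
  ultimately show ?thesis by (rule finite_subset)
qed

lemma polytope_bounded:
  assumes "lattice_polytope Q" shows "bounded Q"
  using assms unfolding lattice_polytope_def
  by (auto intro: finite_imp_bounded_convex_hull)

lemma mink_bounded:
  assumes "finite S" "\<And>i. i \<in> S \<Longrightarrow> bounded (P i)"
  shows "bounded (mink_sum P S)"
proof -
  have "\<forall>i\<in>S. \<exists>B. \<forall>x\<in>P i. norm x \<le> B" using assms(2) bounded_iff by blast
  then obtain B where B: "\<And>i x. i \<in> S \<Longrightarrow> x \<in> P i \<Longrightarrow> norm x \<le> B i" by metis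
  have "\<forall>y\<in>mink_sum P S. norm y \<le> (\<Sum>i\<in>S. B i)"
  proof
    fix y assume "y \<in> mink_sum P S"
    then obtain p where y: "y = (\<Sum>i\<in>S. p i)" and p: "\<forall>i\<in>S. p i \<in> P i"
      unfolding mink_sum_def by auto
    have "norm y \<le> (\<Sum>i\<in>S. norm (p i))" unfolding y by (rule norm_sum)
    also have "\<dots> \<le> (\<Sum>i\<in>S. B i)" by (rule sum_mono) (use p B in auto)
    finally show "norm y \<le> (\<Sum>i\<in>S. B i)" .
  qed
  then show ?thesis unfolding bounded_iff by blast
qed

lemma mink_mono:
  assumes "I \<subseteq> S" "finite S" "\<And>i. i \<in> S \<Longrightarrow> 0 \<in> P i"
  shows "mink_sum P I \<subseteq> mink_sum P S"
proof
  fix y assume "y \<in> mink_sum P I"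
  then obtain p where y: "y = (\<Sum>i\<in>I. p i)" and p: "\<forall>i\<in>I. p i \<in> P i"
    unfolding mink_sum_def by auto
  define q where "q i = (if i \<in> I then p i else 0)" for i
  have "(\<Sum>i\<in>S. q i) = (\<Sum>i\<in>I. p i)"
    unfolding q_def using assms(1,2) by (simp add: sum.If_cases Int_absorb1)
  moreover have "\<forall>i\<in>S. q i \<in> P i" using p assms(3) by (auto simp: q_def)
  ultimately have "\<exists>r. (\<Sum>i\<in>I. p i) = (\<Sum>i\<in>S. r i) \<and> (\<forall>i\<in>S. r i \<in> P i)" by metis
  then show "y \<in> mink_sum P S" unfolding mink_sum_def y by simp
qed

lemma sign_lemma: "(c::nat) \<le> n \<Longrightarrow> (-1::int) ^ n * (-1) ^ (n - c) = (-1) ^ c"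
proof -
  assume "c \<le> n"
  then obtain k where n: "n = c + k" using le_Suc_ex by blast
  have "(-1::int) ^ k * (-1) ^ k = 1"
    by (simp add: power_mult_distrib[symmetric])
  then show ?thesis unfolding n by (simp add: power_add)
qed

theorem theorem1:
  fixes P :: "nat \<Rightarrow> (real^'d) set" and n :: nat
  assumes "n > 0"
    and "\<And>i. i \<in> {1..n} \<Longrightarrow> lattice_polytope (P i)"
    and "\<And>i. i \<in> {1..n} \<Longrightarrow> 0 \<in> P i"
  shows "(-1) ^ n * discrete_mixed_volume P n =
         (\<Sum>\<mu>\<in>mink_sum P {1..n} \<inter> lattice_pts.
            reduced_euler_char (minkowski_complex P n \<mu>))"
proof -
  define L where "L = mink_sum P {1..n} \<inter> lattice_pts"
  have "bounded (mink_sum P {1..n})"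
    using assms(2) by (intro mink_bounded polytope_bounded) auto
  then obtain R where R: "\<forall>x\<in>mink_sum P {1..n}. norm x \<le> R"
    unfolding bounded_iff by blast
  then have "mink_sum P {1..n} \<subseteq> cball 0 R" by (auto simp: mem_cball_0)
  then have "L \<subseteq> cball 0 R \<inter> lattice_pts" unfolding L_def by blast
  then have finL: "finite L" by (rule finite_subset[OF _ lattice_bounded_finite])
  have E: "int (discrete_volume (mink_sum P I)) = (\<Sum>\<mu>\<in>L. if \<mu> \<in> mink_sum P I then 1 else 0)"
    if "I \<in> Pow {1..n}" for I
  proof -
    have "mink_sum P I \<inter> lattice_pts = {\<mu>\<in>L. \<mu> \<in> mink_sum P I}"
      using mink_mono[of I "{1..n}" P] that assms(3) unfolding L_def by auto
    have "(\<Sum>\<mu>\<in>L. if \<mu> \<in> mink_sum P I then 1 else 0) = (\<Sum>\<mu>\<in>{\<mu>\<in>L. \<mu> \<in> mink_sum P I}. (1::int))"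
      by (rule sum.inter_filter[symmetric, OF finL])
    also have "\<dots> = int (card {\<mu>\<in>L. \<mu> \<in> mink_sum P I})" by simp
    finally show ?thesis unfolding discrete_volume_def
      using \<open>mink_sum P I \<inter> lattice_pts = _\<close> by simp
  qed
  have "(-1) ^ n * discrete_mixed_volume P n
      = (\<Sum>I\<in>Pow {1..n}. (-1) ^ card I * int (discrete_volume (mink_sum P I)))"
    unfolding discrete_mixed_volume_def sum_distrib_left
  proof (rule sum.cong[OF refl])
    fix I assume "I \<in> Pow {1..n}"
    then have "card I \<le> n" using card_mono[of "{1..n}" I] by auto
    then have "(-1::int) ^ n * (-1) ^ (n - card I) = (-1) ^ card I"
      by (rule sign_lemma)
    then show "(-1) ^ n * ((-1) ^ (n - card I) * int (discrete_volume (mink_sum P I)))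
        = (-1) ^ card I * int (discrete_volume (mink_sum P I))"
      by (metis mult.assoc)
  qed
  also have "\<dots> = (\<Sum>I\<in>Pow {1..n}. \<Sum>\<mu>\<in>L. (if \<mu> \<in> mink_sum P I then (-1) ^ card I else 0))"
  proof (rule sum.cong[OF refl])
    fix I assume I: "I \<in> Pow {1..n}"
    have "(-1) ^ card I * int (discrete_volume (mink_sum P I))
        = (-1) ^ card I * (\<Sum>\<mu>\<in>L. if \<mu> \<in> mink_sum P I then 1 else 0)"
      using E[OF I] by simp
    also have "\<dots> = (\<Sum>\<mu>\<in>L. (-1) ^ card I * (if \<mu> \<in> mink_sum P I then 1 else 0))"
      by (rule sum_distrib_left)
    also have "\<dots> = (\<Sum>\<mu>\<in>L. (if \<mu> \<in> mink_sum P I then (-1) ^ card I else 0))"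
      by (rule sum.cong[OF refl]) simp
    finally show "(-1) ^ card I * int (discrete_volume (mink_sum P I))
        = (\<Sum>\<mu>\<in>L. (if \<mu> \<in> mink_sum P I then (-1) ^ card I else 0))" .
  qed
  also have "\<dots> = (\<Sum>\<mu>\<in>L. \<Sum>I\<in>Pow {1..n}. (if \<mu> \<in> mink_sum P I then (-1) ^ card I else 0))"
    by (rule sum.swap)
  also have "\<dots> = (\<Sum>\<mu>\<in>L. reduced_euler_char (minkowski_complex P n \<mu>))"
  proof (rule sum.cong[OF refl])
    fix \<mu>
    have fin: "finite (Pow {1..n::nat})" by simp
    have "reduced_euler_char (minkowski_complex P n \<mu>)
        = (\<Sum>I\<in>Pow {1..n}. if \<mu> \<notin> mink_sum P I then (-1::int) ^ (card I + 1) else 0)"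
    proof -
      have "minkowski_complex P n \<mu> = {I\<in>Pow {1..n}. \<mu> \<notin> mink_sum P I}"
        unfolding minkowski_complex_def by auto
      then show ?thesis unfolding reduced_euler_char_def
        using sum.inter_filter[OF fin, of "\<lambda>I. (-1::int) ^ (card I + 1)" "\<lambda>I. \<mu> \<notin> mink_sum P I"]
        by simp
    qed
    also have "\<dots> = (\<Sum>I\<in>Pow {1..n}. (if \<mu> \<in> mink_sum P I then (-1) ^ card I else 0) - (-1) ^ card I)"
      by (rule sum.cong[OF refl]) auto
    also have "\<dots> = (\<Sum>I\<in>Pow {1..n}. (if \<mu> \<in> mink_sum P I then (-1) ^ card I else 0)) - (\<Sum>I\<in>Pow {1..n::nat}. (-1::int) ^ card I)"
      by (simp add: sum_subtractf)
    also have "(\<Sum>I\<in>Pow {1..n::nat}. (-1::int) ^ card I) = 0"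
      using assms(1) by (intro alt_sum_zero) auto
    finally show "(\<Sum>I\<in>Pow {1..n}. (if \<mu> \<in> mink_sum P I then (-1) ^ card I else 0))
        = reduced_euler_char (minkowski_complex P n \<mu>)" by simp
  qed
  finally show ?thesis unfolding L_def .
qed

end
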